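(* Let $D\subset\mathbb{R}^{n-1}$ be a bounded $C^\infty$ domain, $\ell>0$, $\Omega=D\times(0,\ell)$, $\partial\Omega_1=(D\times\{0\})\cup(D\times\{\ell\})$, $\partial\Omega_2=\partial D\times[0,\ell]$, $\alpha\ge0$, $f\in L^2(\Omega)$, and let $v$ solve $-\Delta v=f^{\#}$ in $\Omega$, $\frac{\partial v}{\partial\nu}=0$ on $\partial\Omega_1$, $\frac{\partial v}{\partial\nu}+\alpha v=0$ on $\partial\Omega_2$, where $f^{\#}$ is the decreasing rearrangement of $f$ in the $y$-direction; when $\alpha=0$ assume $f$ and $v$ have zero mean on $\Omega$. Assume $f$ and $f^{\#}$ are continuous on $\overline\Omega$ and sufficiently regular that $v\in C^2(\overline\Omega)$ and the solution $u$ of the same problem with data $f$ in place of $f^{\#}$ (zero mean when $\alpha=0$) lies in $C^2(\overline\Omega)$. Then $v=v^{\#}$ on $\Omega$.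
   Context: Points of $\Omega$ are $(x,y)$, $x\in D$, $y\in(0,\ell)$. For $g\in L^1(0,\ell)$, $g^*(t)=\inf\{s:|\{g>s\}|\le t\}$ for $0<t<\ell$ (endpoints: ess sup, ess inf). For $h$ on $\Omega$, $h^{\#}(x,y)=(h^x)^*(y)$ with $h^x(y)=h(x,y)$. *)

theory Defs
  imports "HOL-Analysis.Analysis"
begin

definition grad :: "('a::euclidean_space \<Rightarrow> real) \<Rightarrow> 'a \<Rightarrow> 'a" where
  "grad f x = (\<Sum>i\<in>Basis. frechet_derivative f (at x) i *\<^sub>R i)"

fun Ck :: "nat \<Rightarrow> ('a::euclidean_space \<Rightarrow> real) \<Rightarrow> bool" where
  "Ck 0 f = continuous_on UNIV f"
| "Ck (Suc k) f = (f differentiable_on UNIV \<and> continuous_on UNIV f \<and>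
      (\<forall>i\<in>Basis. Ck k (\<lambda>x. frechet_derivative f (at x) i)))"

definition smooth :: "('a::euclidean_space \<Rightarrow> real) \<Rightarrow> bool" where
  "smooth f \<longleftrightarrow> (\<forall>k. Ck k f)"

definition smooth_bounded_domain :: "'a::euclidean_space set \<Rightarrow> ('a \<Rightarrow> real) \<Rightarrow> bool" where
  "smooth_bounded_domain D \<rho> \<longleftrightarrow> open D \<and> connected D \<and> D \<noteq> {} \<and> bounded D \<and>
     smooth \<rho> \<and> D = {x. \<rho> x < 0} \<and> frontier D = {x. \<rho> x = 0} \<and>
     (\<forall>x\<in>frontier D. grad \<rho> x \<noteq> 0)"

definition outer_normal :: "('a::euclidean_space \<Rightarrow> real) \<Rightarrow> 'a \<Rightarrow> 'a" where
  "outer_normal \<rho> x = (1 / norm (grad \<rho> x)) *\<^sub>R grad \<rho> x"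

definition drearr :: "real \<Rightarrow> (real \<Rightarrow> real) \<Rightarrow> real \<Rightarrow> real" where
  "drearr l g t = Inf {s. measure lebesgue {y \<in> {0<..<l}. g y > s} \<le> t}"

definition ysharp :: "real \<Rightarrow> ('a \<times> real \<Rightarrow> real) \<Rightarrow> 'a \<times> real \<Rightarrow> real" where
  "ysharp l h p = drearr l (\<lambda>y. h (fst p, y)) (snd p)"

definition cyl :: "'a set \<Rightarrow> real \<Rightarrow> ('a \<times> real) set" where
  "cyl D l = D \<times> {0<..<l}"

text \<open>w is C^2 on the open set U with derivatives up to order 2 extending
  continuously to closure U; G is the (extended) gradient, H p i the (extended)
  gradient of the i-th partial derivative.\<close>
definition C2_closure_data ::
  "('n::euclidean_space) set \<Rightarrow> ('n \<Rightarrow> real) \<Rightarrow> ('n \<Rightarrow> 'n) \<Rightarrow> ('n \<Rightarrow> 'n \<Rightarrow> 'n) \<Rightarrow> bool" where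
  "C2_closure_data U w G H \<longleftrightarrow>
     (\<forall>p\<in>U. (w has_derivative (\<lambda>h. G p \<bullet> h)) (at p)) \<and>
     (\<forall>p\<in>U. \<forall>i\<in>Basis. ((\<lambda>q. G q \<bullet> i) has_derivative (\<lambda>h. H p i \<bullet> h)) (at p)) \<and>
     continuous_on (closure U) w \<and> continuous_on (closure U) G \<and>
     (\<forall>i\<in>Basis. continuous_on (closure U) (\<lambda>p. H p i))"

text \<open>Classical solution in C^2(closure Omega) of
  -Lap w = F in Omega, dw/dnu = 0 on bottom and top, dw/dnu + alpha w = 0 on the lateral boundary.\<close>
definition is_solution ::
  "'a::euclidean_space set \<Rightarrow> ('a \<Rightarrow> real) \<Rightarrow> real \<Rightarrow> real \<Rightarrow> ('a \<times> real \<Rightarrow> real) \<Rightarrow> ('a \<times> real \<Rightarrow> real) \<Rightarrow> bool" where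
  "is_solution D \<rho> l \<alpha> F w \<longleftrightarrow>
     (\<exists>G H. C2_closure_data (cyl D l) w G H \<and>
        (\<forall>p\<in>cyl D l. - (\<Sum>i\<in>Basis. H p i \<bullet> i) = F p) \<and>
        (\<forall>x\<in>D. G (x, 0) \<bullet> (0, -1) = 0 \<and> G (x, l) \<bullet> (0, 1) = 0) \<and>
        (\<forall>x\<in>frontier D. \<forall>y\<in>{0..l}.
            G (x, y) \<bullet> (outer_normal \<rho> x, 0) + \<alpha> * w (x, y) = 0))"

end

theory Submission
  imports Defs
begin

lemma pos_deriv_incr:
  fixes f f' :: "real \<Rightarrow> real"
  assumes "a < b" "continuous_on {a..b} f"
    "\<And>x. a < x \<Longrightarrow> x < b \<Longrightarrow> (f has_real_derivative f' x) (at x)"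
    "\<And>x. a < x \<Longrightarrow> x < b \<Longrightarrow> f' x > 0"
  shows "f a < f b"
  using DERIV_pos_imp_increasing_open[OF assms(1) _ assms(2)] assms(3,4) by blast

lemma one_dim:
  fixes \<phi> g q :: "real \<Rightarrow> real"
  assumes t: "t > 0" and c\<phi>: "continuous_on {0..t} \<phi>"
    and d\<phi>: "\<And>s. 0 < s \<Longrightarrow> s < t \<Longrightarrow> (\<phi> has_real_derivative g s) (at s)"
    and cg: "continuous_on {0..t} g"
    and dg: "\<And>s. 0 < s \<Longrightarrow> s < t \<Longrightarrow> (g has_real_derivative q s) (at s)"
    and cq: "continuous_on {0..t} q"
    and mx: "\<And>s. 0 \<le> s \<Longrightarrow> s \<le> t \<Longrightarrow> \<phi> s \<le> \<phi> 0"
  shows "g 0 \<le> 0 \<and> (g 0 = 0 \<longrightarrow> q 0 \<le> 0)"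
proof -
  have loc: "\<exists>s1>0. s1 \<le> t \<and> (\<forall>s. 0 \<le> s \<and> s \<le> s1 \<longrightarrow> h s > 0)"
    if ch: "continuous_on {0..t} h" and h0: "h 0 > 0" for h :: "real \<Rightarrow> real"
  proof -
    from ch have "continuous (at 0 within {0..t}) h"
      using t by (simp add: continuous_on_eq_continuous_within)
    then have "\<forall>\<^sub>F s in at 0 within {0..t}. h s > 0"
      using h0 by (simp add: continuous_within order_tendstoD(1))
    then obtain d where d: "d > 0" "\<And>s. s \<in> {0..t} \<Longrightarrow> s \<noteq> 0 \<Longrightarrow> dist s 0 < d \<Longrightarrow> h s > 0"
      by (auto simp: eventually_at)
    show ?thesis
      apply (rule exI[of _ "min t (d/2)"])
      using d t h0 apply (auto simp: dist_real_def)
      subgoal for s using d(2)[of s] h0 by (cases "s = 0") auto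
      done
  qed
  have A: "g 0 \<le> 0"
  proof (rule ccontr)
    assume "\<not> g 0 \<le> 0"
    then obtain s1 where s1: "s1 > 0" "s1 \<le> t" "\<And>s. 0 \<le> s \<Longrightarrow> s \<le> s1 \<Longrightarrow> g s > 0"
      using loc[OF cg] by auto
    have "\<phi> 0 < \<phi> s1"
      by (rule pos_deriv_incr[of 0 s1 \<phi> g]) (use s1 d\<phi> continuous_on_subset[OF c\<phi>] in auto)
    with mx[of s1] s1 show False by auto
  qed
  have B: "q 0 \<le> 0" if g0: "g 0 = 0"
  proof (rule ccontr)
    assume "\<not> q 0 \<le> 0"
    then obtain s1 where s1: "s1 > 0" "s1 \<le> t" "\<And>s. 0 \<le> s \<Longrightarrow> s \<le> s1 \<Longrightarrow> q s > 0"
      using loc[OF cq] by auto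
    have gp: "g s > 0" if "0 < s" "s \<le> s1" for s
    proof -
      have "g 0 < g s"
        by (rule pos_deriv_incr[of 0 s g q]) (use that s1 dg continuous_on_subset[OF cg] in auto)
      with g0 show ?thesis by simp
    qed
    have "\<phi> 0 < \<phi> s1"
      by (rule pos_deriv_incr[of 0 s1 \<phi> g]) (use s1 d\<phi> gp continuous_on_subset[OF c\<phi>] in auto)
    with mx[of s1] s1 show False by auto
  qed
  show ?thesis using A B by blast
qed

definition Qf :: "('n::euclidean_space \<Rightarrow> 'n \<Rightarrow> 'n) \<Rightarrow> 'n \<Rightarrow> 'n \<Rightarrow> real" where
  "Qf H p d = (\<Sum>i\<in>Basis. (d \<bullet> i) * (H p i \<bullet> d))"

lemma line_deriv:
  assumes "(F has_derivative (\<lambda>h. V \<bullet> h)) (at (p0 + s *\<^sub>R d))"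
  shows "((\<lambda>s. F (p0 + s *\<^sub>R d)) has_real_derivative (V \<bullet> d)) (at s)"
proof -
  have l: "((\<lambda>s. p0 + s *\<^sub>R d) has_derivative (\<lambda>h. h *\<^sub>R d)) (at s)"
    by (auto intro!: derivative_eq_intros)
  have "((\<lambda>s. F (p0 + s *\<^sub>R d)) has_derivative (\<lambda>h. V \<bullet> (h *\<^sub>R d))) (at s)"
    using has_derivative_compose[OF l assms] by simp
  moreover have "(\<lambda>h. V \<bullet> (h *\<^sub>R d)) = (*) (V \<bullet> d)" by (auto simp: fun_eq_iff)
  ultimately show ?thesis by (simp add: has_field_derivative_def)
qed

lemma dir_step:
  fixes Z :: "'a::euclidean_space \<times> real \<Rightarrow> real" and G :: "'a \<times> real \<Rightarrow> 'a \<times> real"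
    and H :: "'a \<times> real \<Rightarrow> 'a \<times> real \<Rightarrow> 'a \<times> real"
  assumes cZ: "continuous_on (closure U) Z" and cG: "continuous_on (closure U) G"
    and cH: "\<forall>i\<in>Basis. continuous_on (closure U) (\<lambda>p. H p i)"
    and dZ: "\<forall>p\<in>U. (Z has_derivative (\<lambda>h. G p \<bullet> h)) (at p)"
    and dG: "\<forall>p\<in>U. \<forall>i\<in>Basis. ((\<lambda>q. G q \<bullet> i) has_derivative (\<lambda>h. H p i \<bullet> h)) (at p)"
    and p0: "p0 \<in> closure U"
    and t: "t > 0" and seg: "\<And>s. 0 < s \<Longrightarrow> s < t \<Longrightarrow> p0 + s *\<^sub>R d \<in> U"
    and mx: "\<forall>p\<in>closure U. Z p + \<epsilon> * (snd p - a)\<^sup>2 \<le> Z p0 + \<epsilon> * (snd p0 - a)\<^sup>2"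
  shows "G p0 \<bullet> d + 2 * \<epsilon> * (snd p0 - a) * snd d \<le> 0 \<and>
    (G p0 \<bullet> d + 2 * \<epsilon> * (snd p0 - a) * snd d = 0 \<longrightarrow> Qf H p0 d + 2 * \<epsilon> * (snd d)\<^sup>2 \<le> 0)"
proof -
  define \<phi> where "\<phi> s = Z (p0 + s *\<^sub>R d) + \<epsilon> * (snd p0 + s * snd d - a)\<^sup>2" for s
  define g where "g s = (\<Sum>i\<in>Basis. (d \<bullet> i) * (G (p0 + s *\<^sub>R d) \<bullet> i))
      + 2 * \<epsilon> * (snd p0 + s * snd d - a) * snd d" for s
  define q where "q s = Qf H (p0 + s *\<^sub>R d) d + 2 * \<epsilon> * (snd d)\<^sup>2" for s
  have ginner: "(\<Sum>i\<in>Basis. (d \<bullet> i) * (V \<bullet> i)) = V \<bullet> d" for V :: "'a \<times> real"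
    by (subst euclidean_inner[of V d]) (simp add: mult.commute)
  have segc: "p0 + s *\<^sub>R d \<in> closure U" if "0 \<le> s" "s \<le> t/2" for s
  proof (cases "s = 0")
    case True then show ?thesis using p0 by simp
  next
    case False then show ?thesis using seg[of s] that t closure_subset by force
  qed
  have segim: "(\<lambda>s. p0 + s *\<^sub>R d) ` {0..t/2} \<subseteq> closure U" using segc by auto
  have cl: "continuous_on {0..t/2} (\<lambda>s. p0 + s *\<^sub>R d)" by (intro continuous_intros)
  have c1: "continuous_on {0..t/2} (\<lambda>s. Z (p0 + s *\<^sub>R d))"
    by (rule continuous_on_compose2[OF cZ cl segim])
  have c2: "continuous_on {0..t/2} (\<lambda>s. G (p0 + s *\<^sub>R d))"
    by (rule continuous_on_compose2[OF cG cl segim])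
  have c3: "continuous_on {0..t/2} (\<lambda>s. H (p0 + s *\<^sub>R d) i)" if "i \<in> Basis" for i
    using continuous_on_compose2[OF cH[rule_format, OF that] cl segim] .
  have "g 0 \<le> 0 \<and> (g 0 = 0 \<longrightarrow> q 0 \<le> 0)"
  proof (rule one_dim[of "t/2" \<phi> g q])
    show "0 < t/2" using t by simp
    show "continuous_on {0..t/2} \<phi>" unfolding \<phi>_def by (intro continuous_intros c1)
    show "continuous_on {0..t/2} g" unfolding g_def by (intro continuous_intros c2)
    show "continuous_on {0..t/2} q" unfolding q_def Qf_def by (intro continuous_intros c3)
    show "\<phi> s \<le> \<phi> 0" if "0 \<le> s" "s \<le> t/2" for s
      using mx[rule_format, OF segc[OF that]] by (simp add: \<phi>_def)
    show "(\<phi> has_real_derivative g s) (at s)" if "0 < s" "s < t/2" for s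
    proof -
      have pU: "p0 + s *\<^sub>R d \<in> U" using seg[of s] that by simp
      have a: "((\<lambda>s. Z (p0 + s *\<^sub>R d)) has_real_derivative (G (p0 + s *\<^sub>R d) \<bullet> d)) (at s)"
        by (rule line_deriv) (use dZ pU in blast)
      have b: "((\<lambda>s. \<epsilon> * (snd p0 + s * snd d - a)\<^sup>2) has_real_derivative
          2 * \<epsilon> * (snd p0 + s * snd d - a) * snd d) (at s)"
        by (auto intro!: derivative_eq_intros)
      show ?thesis unfolding \<phi>_def g_def ginner using DERIV_add[OF a b] by simp
    qed
    show "(g has_real_derivative q s) (at s)" if "0 < s" "s < t/2" for s
    proof -
      have pU: "p0 + s *\<^sub>R d \<in> U" using seg[of s] that by simp
      have a: "((\<lambda>s. (\<Sum>i\<in>Basis. (d \<bullet> i) * (G (p0 + s *\<^sub>R d) \<bullet> i))) has_real_derivative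
           (\<Sum>i\<in>Basis. (d \<bullet> i) * (H (p0 + s *\<^sub>R d) i \<bullet> d))) (at s)"
      proof (rule DERIV_sum)
        fix i :: "'a \<times> real" assume i: "i \<in> Basis"
        have "((\<lambda>s. G (p0 + s *\<^sub>R d) \<bullet> i) has_real_derivative (H (p0 + s *\<^sub>R d) i \<bullet> d)) (at s)"
          by (rule line_deriv[where F="\<lambda>q. G q \<bullet> i"]) (use dG pU i in blast)
        then show "((\<lambda>s. (d \<bullet> i) * (G (p0 + s *\<^sub>R d) \<bullet> i)) has_real_derivative
           (d \<bullet> i) * (H (p0 + s *\<^sub>R d) i \<bullet> d)) (at s)"
          by (rule DERIV_cmult)
      qed
      have b: "((\<lambda>s. 2 * \<epsilon> * (snd p0 + s * snd d - a) * snd d) has_real_derivative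
          2 * \<epsilon> * (snd d)\<^sup>2) (at s)"
        by (auto intro!: derivative_eq_intros simp: power2_eq_square)
      show ?thesis unfolding q_def g_def Qf_def using DERIV_add[OF a b] by simp
    qed
  qed
  then show ?thesis unfolding g_def q_def using ginner[of "G p0"] by simp
qed

lemma max_second_order:
  fixes Z :: "'a::euclidean_space \<times> real \<Rightarrow> real" and G :: "'a \<times> real \<Rightarrow> 'a \<times> real"
    and H :: "'a \<times> real \<Rightarrow> 'a \<times> real \<Rightarrow> 'a \<times> real" and n :: 'a
  assumes cZ: "continuous_on (closure U) Z" and cG: "continuous_on (closure U) G"
    and cH: "\<forall>i\<in>Basis. continuous_on (closure U) (\<lambda>p. H p i)"
    and dZ: "\<forall>p\<in>U. (Z has_derivative (\<lambda>h. G p \<bullet> h)) (at p)"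
    and dG: "\<forall>p\<in>U. \<forall>i\<in>Basis. ((\<lambda>q. G q \<bullet> i) has_derivative (\<lambda>h. H p i \<bullet> h)) (at p)"
    and p0: "p0 \<in> closure U"
    and mx: "\<forall>p\<in>closure U. Z p + \<epsilon> * (snd p - a)\<^sup>2 \<le> Z p0 + \<epsilon> * (snd p0 - a)\<^sup>2"
    and n: "n \<noteq> 0"
    and adm: "\<And>d. fst d \<bullet> n < 0 \<Longrightarrow> \<exists>t>0. \<forall>s. 0 < s \<and> s < t \<longrightarrow> p0 + s *\<^sub>R d \<in> U"
    and Bn: "G p0 \<bullet> (n, 0) \<le> 0"
  shows "(\<Sum>b\<in>Basis. Qf H p0 b + 2 * \<epsilon> * (snd b)\<^sup>2) \<le> 0"
proof -
  define GY where "GY d = G p0 \<bullet> d + 2 * \<epsilon> * (snd p0 - a) * snd d" for d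
  define QY where "QY d = Qf H p0 d + 2 * \<epsilon> * (snd d)\<^sup>2" for d
  define N where "N = (n, 0::real)"
  have step: "GY d \<le> 0 \<and> (GY d = 0 \<longrightarrow> QY d \<le> 0)" if dn: "fst d \<bullet> n < 0" for d
  proof -
    obtain t where t: "t > 0" "\<And>s. 0 < s \<Longrightarrow> s < t \<Longrightarrow> p0 + s *\<^sub>R d \<in> U"
      using adm[OF dn] by metis
    show ?thesis unfolding GY_def QY_def
      by (rule dir_step[OF cZ cG cH dZ dG p0 t mx])
  qed
  have GYadd: "GY (d + e) = GY d + GY e" for d e
    by (simp add: GY_def inner_add_right algebra_simps)
  have GYscale: "GY (c *\<^sub>R d) = c * GY d" for c d
    by (simp add: GY_def algebra_simps)
  have GYminus: "GY (- d) = - GY d" for d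
    using GYscale[of "-1" d] by simp
  have nn: "n \<bullet> n > 0" using n by simp
  have fN: "fst N \<bullet> n = n \<bullet> n" by (simp add: N_def)
  have GYN: "GY N = 0"
  proof -
    have "GY N \<le> 0" using Bn by (simp add: GY_def N_def)
    moreover have "GY (- N) \<le> 0" using step[of "-N"] fN nn by simp
    ultimately show ?thesis using GYminus[of N] by simp
  qed
  have GY0: "GY d = 0" for d
  proof -
    define lam where "lam = (fst d \<bullet> n) / (n \<bullet> n)"
    define d' where "d' = d - lam *\<^sub>R N"
    have fd': "fst d' \<bullet> n = 0" using nn by (simp add: d'_def lam_def N_def inner_diff_left)
    have "GY (d' - N) \<le> 0" using step[of "d' - N"] fd' fN nn by (simp add: inner_diff_left)
    moreover have "GY (- d' - N) \<le> 0" using step[of "- d' - N"] fd' fN nn by (simp add: inner_diff_left)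
    moreover have "GY (d' - N) = GY d'" using GYadd[of d' "-N"] GYminus[of N] GYN by simp
    moreover have "GY (- d' - N) = - GY d'" using GYadd[of "-d'" "-N"] GYminus GYN by simp
    ultimately have "GY d' = 0" by linarith
    moreover have "d = d' + lam *\<^sub>R N" by (simp add: d'_def)
    ultimately show ?thesis using GYadd GYscale GYN by simp
  qed
  have QYin: "QY d \<le> 0" if "fst d \<bullet> n < 0" for d
    using step[OF that] GY0[of d] by simp
  have QYminus: "QY (- d) = QY d" for d
    by (simp add: QY_def Qf_def)
  have QYall: "QY d \<le> 0" for d
  proof -
    define e where "e = (if fst d \<bullet> n \<le> 0 then d else - d)"
    have fe: "fst e \<bullet> n \<le> 0" by (simp add: e_def)
    have Qe: "QY e = QY d" by (simp add: e_def QYminus)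
    have lim: "((\<lambda>\<delta>. QY (e - \<delta> *\<^sub>R N)) \<longlongrightarrow> QY (e - 0 *\<^sub>R N)) (at_right 0)"
      unfolding QY_def Qf_def by (intro tendsto_intros)
    have ev: "\<forall>\<^sub>F \<delta> in at_right 0. QY (e - \<delta> *\<^sub>R N) \<le> 0"
    proof -
      have "QY (e - \<delta> *\<^sub>R N) \<le> 0" if "\<delta> > 0" for \<delta> :: real
      proof (rule QYin)
        have "fst (e - \<delta> *\<^sub>R N) \<bullet> n = fst e \<bullet> n - \<delta> * (n \<bullet> n)"
          by (simp add: N_def inner_diff_left)
        also have "\<dots> < 0" using fe that nn by (smt (verit) mult_pos_pos)
        finally show "fst (e - \<delta> *\<^sub>R N) \<bullet> n < 0" .
      qed
      then show ?thesis by (auto simp: eventually_at_right_field intro: exI[of _ 1])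
    qed
    have "QY (e - 0 *\<^sub>R N) \<le> 0"
      by (rule tendsto_upperbound[OF lim ev]) simp
    then show ?thesis using Qe by simp
  qed
  show ?thesis
    by (rule sum_nonpos) (use QYall in \<open>simp add: QY_def\<close>)
qed

lemma grad_inner:
  assumes "(f has_derivative L) (at x)"
  shows "grad f x \<bullet> u = L u"
proof -
  have lin: "linear L" using assms has_derivative_linear by blast
  have fd: "frechet_derivative f (at x) = L"
    using assms by (metis frechet_derivative_at)
  have "L u = L (\<Sum>i\<in>Basis. (u \<bullet> i) *\<^sub>R i)" by (simp add: euclidean_representation)
  also have "\<dots> = (\<Sum>i\<in>Basis. (u \<bullet> i) * L i)"
    using lin by (simp add: linear_sum linear_scale)
  finally have 1: "L u = (\<Sum>i\<in>Basis. (u \<bullet> i) * L i)" .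
  have 2: "grad f x \<bullet> u = (\<Sum>i\<in>Basis. L i * (i \<bullet> u))"
    unfolding grad_def fd by (simp add: inner_sum_left)
  have 3: "(\<Sum>i\<in>Basis. L i * (i \<bullet> u)) = (\<Sum>i\<in>Basis. (u \<bullet> i) * L i)"
    by (rule sum.cong) (auto simp: inner_commute)
  show ?thesis using 1 2 3 by simp
qed

lemma max_principle:
  fixes D :: "'a::euclidean_space set" and Z :: "'a \<times> real \<Rightarrow> real" and G :: "'a \<times> real \<Rightarrow> 'a \<times> real"
    and H :: "'a \<times> real \<Rightarrow> 'a \<times> real \<Rightarrow> 'a \<times> real"
  assumes dom: "smooth_bounded_domain D \<rho>" and ab: "a < b" and alpha: "\<alpha> \<ge> 0" and M: "M \<ge> 0"
    and cZ: "continuous_on (closure (D \<times> {a<..<b})) Z" and cG: "continuous_on (closure (D \<times> {a<..<b})) G"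
    and cH: "\<forall>i\<in>Basis. continuous_on (closure (D \<times> {a<..<b})) (\<lambda>p. H p i)"
    and dZ: "\<forall>p\<in>D \<times> {a<..<b}. (Z has_derivative (\<lambda>h. G p \<bullet> h)) (at p)"
    and dG: "\<forall>p\<in>D \<times> {a<..<b}. \<forall>i\<in>Basis. ((\<lambda>q. G q \<bullet> i) has_derivative (\<lambda>h. H p i \<bullet> h)) (at p)"
    and lap: "\<forall>p\<in>D \<times> {a<..<b}. (\<Sum>i\<in>Basis. H p i \<bullet> i) \<ge> 0"
    and rob: "\<forall>x\<in>frontier D. \<forall>y\<in>{a<..<b}. G (x, y) \<bullet> (outer_normal \<rho> x, 0) + \<alpha> * Z (x, y) = 0"
    and bd: "\<forall>x\<in>D. Z (x, a) \<le> M \<and> Z (x, b) \<le> M"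
  shows "\<forall>p\<in>D \<times> {a<..<b}. Z p \<le> M"
proof (rule ccontr)
  define U where "U = D \<times> {a<..<b}"
  assume "\<not> (\<forall>p\<in>D \<times> {a<..<b}. Z p \<le> M)"
  then obtain p where pU: "p \<in> U" and pM: "Z p > M" unfolding U_def by force
  define \<eta> where "\<eta> = Z p - M"
  define K where "K = (b - a)\<^sup>2"
  define \<epsilon> where "\<epsilon> = \<eta> / (2 * (K + 1))"
  have \<eta>: "\<eta> > 0" using pM by (simp add: \<eta>_def)
  have K: "K \<ge> 0" by (simp add: K_def)
  have \<epsilon>: "\<epsilon> > 0" using \<eta> K by (simp add: \<epsilon>_def)
  have \<epsilon>K: "\<epsilon> * K < \<eta>" 
  proof -
    have "\<epsilon> * K = \<eta> * K / (2 * (K + 1))" by (simp add: \<epsilon>_def)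
    also have "\<dots> < \<eta>"
    proof -
      have c: "2 * (K + 1) > 0" using K by simp
      have "\<eta> * K < \<eta> * (2 * (K + 1))" using \<eta> K by (intro mult_strict_left_mono) auto
      then show ?thesis using pos_divide_less_eq[OF c] by (metis mult.commute)
    qed
    finally show ?thesis .
  qed
  have Dopen: "open D" and Dbd: "bounded D" and Deq: "D = {x. \<rho> x < 0}"
    and Dfr: "frontier D = {x. \<rho> x = 0}" and gradnz: "\<forall>x\<in>frontier D. grad \<rho> x \<noteq> 0"
    and sm: "smooth \<rho>"
    using dom by (auto simp: smooth_bounded_domain_def)
  have clU: "closure U = closure D \<times> {a..b}" using ab by (simp add: U_def closure_Times)
  have cpt: "compact (closure U)" unfolding clU
    using Dbd by (intro compact_Times) (auto simp: compact_eq_bounded_closed bounded_closure)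
  have ne: "closure U \<noteq> {}" using pU closure_subset by auto
  have cY: "continuous_on (closure U) (\<lambda>p. Z p + \<epsilon> * (snd p - a)\<^sup>2)"
    using cZ unfolding U_def by (intro continuous_intros)
  obtain p0 where p0: "p0 \<in> closure U"
    and mx: "\<forall>q\<in>closure U. Z q + \<epsilon> * (snd q - a)\<^sup>2 \<le> Z p0 + \<epsilon> * (snd p0 - a)\<^sup>2"
    using continuous_attains_sup[OF cpt ne cY] by blast
  obtain x0 y0 where p0eq: "p0 = (x0, y0)" by fastforce
  have x0: "x0 \<in> closure D" and y0: "a \<le> y0" "y0 \<le> b" using p0 clU p0eq by auto
  have Zp0: "Z p0 > M"
  proof -
    have "Z p \<le> Z p + \<epsilon> * (snd p - a)\<^sup>2" using \<epsilon> by simp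
    also have "\<dots> \<le> Z p0 + \<epsilon> * (y0 - a)\<^sup>2" 
    proof -
      have "p \<in> closure U" using pU closure_subset by blast
      from mx[rule_format, OF this] show ?thesis using p0eq by simp
    qed
    finally have "Z p \<le> Z p0 + \<epsilon> * (y0 - a)\<^sup>2" .
    moreover have "(y0 - a)\<^sup>2 \<le> K" unfolding K_def using y0 by (intro power_mono) auto
    then have "\<epsilon> * (y0 - a)\<^sup>2 \<le> \<epsilon> * K" using \<epsilon> by simp
    ultimately show ?thesis using \<epsilon>K by (simp add: \<eta>_def)
  qed
  have bdcl: "Z (x, c) \<le> M" if "x \<in> closure D" "c = a \<or> c = b" for x c
  proof (rule continuous_le_on_closure[where f="\<lambda>x. Z (x, c)" and S=D])
    have "(\<lambda>x. (x, c)) ` closure D \<subseteq> closure (D \<times> {a<..<b})" using that ab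
      by (auto simp: closure_Times)
    then show "continuous_on (closure D) (\<lambda>x. Z (x, c))"
      by (intro continuous_on_compose2[OF cZ]) (auto intro!: continuous_intros)
    show "x \<in> closure D" by fact
    show "\<And>x. x \<in> D \<Longrightarrow> Z (x, c) \<le> M" using bd that by auto
  qed
  have "y0 \<noteq> a"
  proof
    assume "y0 = a" then have "Z p0 \<le> M" using bdcl[OF x0, of a] p0eq by simp
    with Zp0 show False by simp
  qed
  moreover have "y0 \<noteq> b"
  proof
    assume "y0 = b" then have "Z p0 \<le> M" using bdcl[OF x0, of b] p0eq by simp
    with Zp0 show False by simp
  qed
  ultimately have y0': "a < y0" "y0 < b" using y0 by auto
  have lap0: "(\<Sum>i\<in>Basis. H p0 i \<bullet> i) \<ge> 0"
  proof (rule continuous_ge_on_closure[where S=U])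
    show "continuous_on (closure U) (\<lambda>p. \<Sum>i\<in>Basis. H p i \<bullet> i)"
      using cH unfolding U_def by (intro continuous_intros) auto
  qed (use p0 lap U_def in auto)
  have QB: "Qf H p0 i = H p0 i \<bullet> i" if "i \<in> Basis" for i
  proof -
    have "Qf H p0 i = (\<Sum>j\<in>Basis. (if j = i then H p0 j \<bullet> i else 0))"
      unfolding Qf_def by (rule sum.cong) (auto simp: inner_Basis that inner_commute)
    also have "\<dots> = H p0 i \<bullet> i" using that by simp
    finally show ?thesis .
  qed
  have snd1: "(\<Sum>i\<in>(Basis::('a\<times>real) set). (snd i)\<^sup>2) \<ge> (1::real)"
  proof -
    have "(0::'a, 1::real) \<in> Basis" by (simp add: Basis_prod_def)
    then have "(snd (0::'a, 1::real))\<^sup>2 \<le> (\<Sum>i\<in>Basis. (snd (i::'a\<times>real))\<^sup>2)"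
      by (intro member_le_sum) auto
    then show ?thesis by simp
  qed
  have pos: "(\<Sum>i\<in>Basis. Qf H p0 i + 2 * \<epsilon> * (snd i)\<^sup>2) > 0"
  proof -
    have "(\<Sum>i\<in>Basis. Qf H p0 i + 2 * \<epsilon> * (snd i)\<^sup>2) =
        (\<Sum>i\<in>Basis. H p0 i \<bullet> i) + 2 * \<epsilon> * (\<Sum>i\<in>Basis. (snd (i::'a\<times>real))\<^sup>2)"
      by (simp add: sum.distrib QB sum_distrib_left)
    moreover have "2 * \<epsilon> * (\<Sum>i\<in>Basis. (snd (i::'a\<times>real))\<^sup>2) \<ge> 2 * \<epsilon>"
      using snd1 \<epsilon> by simp
    ultimately show ?thesis using lap0 \<epsilon> by linarith
  qed
  have cZ': "continuous_on (closure U) Z" and cG': "continuous_on (closure U) G"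
    and cH': "\<forall>i\<in>Basis. continuous_on (closure U) (\<lambda>p. H p i)"
    and dZ': "\<forall>p\<in>U. (Z has_derivative (\<lambda>h. G p \<bullet> h)) (at p)"
    and dG': "\<forall>p\<in>U. \<forall>i\<in>Basis. ((\<lambda>q. G q \<bullet> i) has_derivative (\<lambda>h. H p i \<bullet> h)) (at p)"
    using cZ cG cH dZ dG by (auto simp: U_def)
  have "(\<Sum>i\<in>Basis. Qf H p0 i + 2 * \<epsilon> * (snd i)\<^sup>2) \<le> 0"
  proof (cases "x0 \<in> D")
    case True
    have p0U: "p0 \<in> U" using True y0' p0eq by (simp add: U_def)
    have oU: "open U" unfolding U_def using Dopen by (intro open_Times) auto
    have admall: "\<exists>t>0. \<forall>s. 0 < s \<and> s < t \<longrightarrow> p0 + s *\<^sub>R d \<in> U" for d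
    proof -
      obtain e where e: "e > 0" "ball p0 e \<subseteq> U" using oU p0U open_contains_ball by blast
      show ?thesis
      proof (intro exI conjI allI impI)
        show "e / (norm d + 1) > 0" using e norm_ge_zero[of d] by (intro divide_pos_pos) linarith+
        fix s assume s: "0 < s \<and> s < e / (norm d + 1)"
        have "norm (s *\<^sub>R d) = s * norm d" using s by simp
        also have "\<dots> \<le> s * (norm d + 1)" using s by simp
        also have "\<dots> < e"
        proof -
          have nd: "norm d + 1 > 0" by (smt (verit) norm_ge_zero)
          show ?thesis using s pos_less_divide_eq[OF nd] by blast
        qed
        finally have "dist p0 (p0 + s *\<^sub>R d) < e" by (simp add: dist_norm)
        then show "p0 + s *\<^sub>R d \<in> U" using e by auto
      qed
    qed
    obtain n :: 'a where n: "n \<in> Basis" using nonempty_Basis by blast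
    have nz: "n \<noteq> 0" using n by auto
    have Bn: "G p0 \<bullet> (n, 0) \<le> 0"
    proof -
      obtain t where t: "t > 0" "\<And>s. 0 < s \<Longrightarrow> s < t \<Longrightarrow> p0 + s *\<^sub>R (n, 0) \<in> U"
        using admall[of "(n, 0)"] by metis
      from dir_step[OF cZ' cG' cH' dZ' dG' p0 t mx] show ?thesis by simp
    qed
    show ?thesis
      by (rule max_second_order[OF cZ' cG' cH' dZ' dG' p0 mx nz]) (use admall Bn in auto)
  next
    case False
    then have x0f: "x0 \<in> frontier D" using x0 closure_Un_frontier by blast
    define n where "n = grad \<rho> x0"
    have nz: "n \<noteq> 0" using gradnz x0f by (simp add: n_def)
    have rho0: "\<rho> x0 = 0" using Dfr x0f by auto
    have "Ck 1 \<rho>" using sm by (simp add: smooth_def)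
    then have "\<rho> differentiable (at x0)"
      by (simp add: differentiable_on_def)
    then have dr: "(\<rho> has_derivative frechet_derivative \<rho> (at x0)) (at x0)"
      using frechet_derivative_works by blast
    have dr2: "(\<rho> has_derivative (\<lambda>h. n \<bullet> h)) (at x0)"
    proof -
      have "(\<lambda>h. n \<bullet> h) = frechet_derivative \<rho> (at x0)"
        using grad_inner[OF dr] by (auto simp: n_def fun_eq_iff)
      then show ?thesis using dr by simp
    qed
    have adm: "\<exists>t>0. \<forall>s. 0 < s \<and> s < t \<longrightarrow> p0 + s *\<^sub>R d \<in> U" if dn: "fst d \<bullet> n < 0" for d
    proof -
      define u where "u = fst d"
      have "((\<lambda>s. \<rho> (x0 + s *\<^sub>R u)) has_real_derivative (n \<bullet> u)) (at 0)"
        using line_deriv[of \<rho> n x0 0 u] dr2 by simp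
      then have "((\<lambda>s. \<rho> (x0 + s *\<^sub>R u)) has_real_derivative (n \<bullet> u)) (at 0 within {0<..})"
        by (rule has_field_derivative_at_within)
      then have "((\<lambda>s. (\<rho> (x0 + s *\<^sub>R u) - \<rho> (x0 + 0 *\<^sub>R u)) / (s - 0)) \<longlongrightarrow> n \<bullet> u) (at_right 0)"
        by (simp add: has_field_derivative_iff)
      moreover have "n \<bullet> u < 0" using dn by (simp add: u_def inner_commute)
      ultimately have e1: "\<forall>\<^sub>F s in at_right 0. (\<rho> (x0 + s *\<^sub>R u) - \<rho> (x0 + 0 *\<^sub>R u)) / (s - 0) < 0"
        by (rule order_tendstoD)
      have ly: "((\<lambda>s. y0 + s * snd d) \<longlongrightarrow> y0 + 0 * snd d) (at_right 0)"
        by (intro tendsto_intros)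
      have e2: "\<forall>\<^sub>F s in at_right 0. a < y0 + s * snd d"
        by (rule order_tendstoD(1)[OF ly]) (use y0' in simp)
      have e3: "\<forall>\<^sub>F s in at_right 0. y0 + s * snd d < b"
        by (rule order_tendstoD(2)[OF ly]) (use y0' in simp)
      have e0: "\<forall>\<^sub>F s in at_right 0. (0::real) < s" by (rule eventually_at_right_less)
      have "\<forall>\<^sub>F s in at_right 0. p0 + s *\<^sub>R d \<in> U"
        using e0 e1 e2 e3
      proof eventually_elim
        case (elim s)
        have "\<rho> (x0 + s *\<^sub>R u) < 0" using elim(1,2) rho0 by (simp add: divide_less_0_iff)
        then have "x0 + s *\<^sub>R u \<in> D" using Deq by simp
        moreover have "p0 + s *\<^sub>R d = (x0 + s *\<^sub>R u, y0 + s * snd d)"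
          using p0eq by (simp add: prod_eq_iff u_def)
        ultimately show ?case using elim(3,4) by (simp add: U_def)
      qed
      then obtain b' where "b' > 0" "\<forall>s>0. s < b' \<longrightarrow> p0 + s *\<^sub>R d \<in> U"
        by (auto simp: eventually_at_right_field)
      then show ?thesis by blast
    qed
    have Bn: "G p0 \<bullet> (n, 0) \<le> 0"
    proof -
      define \<nu> where "\<nu> = outer_normal \<rho> x0"
      have nv: "(n, 0::real) = norm n *\<^sub>R (\<nu>, 0::real)"
        using nz by (simp add: \<nu>_def outer_normal_def n_def)
      have "G (x0, y0) \<bullet> (\<nu>, 0) + \<alpha> * Z (x0, y0) = 0"
        using rob x0f y0' by (simp add: \<nu>_def)
      then have "G p0 \<bullet> (\<nu>, 0) = - \<alpha> * Z p0" using p0eq by simp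
      also have "\<dots> \<le> 0" using alpha Zp0 M by (simp add: mult_nonneg_nonneg)
      finally have "G p0 \<bullet> (\<nu>, 0) \<le> 0" .
      moreover have "G p0 \<bullet> (n, 0) = norm n * (G p0 \<bullet> (\<nu>, 0))"
        by (subst nv) (simp only: inner_scaleR_right)
      ultimately show ?thesis by (simp add: mult_nonneg_nonpos)
    qed
    show ?thesis
      by (rule max_second_order[OF cZ' cG' cH' dZ' dG' p0 mx nz]) (use adm Bn in auto)
  qed
  with pos show False by simp
qed

lemma meas_Ioo: "a \<le> b \<Longrightarrow> measure lebesgue {a<..<(b::real)} = b - a"
  by (subst measure_completion) auto

lemma Ioo_lmeas: "{a<..<(b::real)} \<in> lmeasurable"
  by (rule lmeasurable_open) auto

lemma drearr_antimono:
  fixes g :: "real \<Rightarrow> real"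
  assumes bd: "\<And>y. 0 < y \<Longrightarrow> y < l \<Longrightarrow> \<bar>g y\<bar> \<le> B"
    and t: "0 < t1" "t1 \<le> t2" "t2 < l"
  shows "drearr l g t2 \<le> drearr l g t1"
  unfolding drearr_def
proof (rule cInf_superset_mono)
  have "{y \<in> {0<..<l}. g y > B} = {}" using bd by force
  then have "measure lebesgue {y \<in> {0<..<l}. B < g y} = 0" by (simp only:) simp
  then have "B \<in> {s. measure lebesgue {y \<in> {0<..<l}. s < g y} \<le> t1}" using t by simp
  then show "{s. measure lebesgue {y \<in> {0<..<l}. s < g y} \<le> t1} \<noteq> {}" by blast
  show "bdd_below {s. measure lebesgue {y \<in> {0<..<l}. s < g y} \<le> t2}"
  proof (rule bdd_belowI)
    fix s assume s: "s \<in> {s. measure lebesgue {y \<in> {0<..<l}. s < g y} \<le> t2}"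
    show "- B \<le> s"
    proof (rule ccontr)
      assume "\<not> - B \<le> s"
      then have "{y \<in> {0<..<l}. s < g y} = {0<..<l}" using bd by force
      then show False using s t meas_Ioo[of 0 l] by simp
    qed
  qed
  show "{s. measure lebesgue {y \<in> {0<..<l}. s < g y} \<le> t1}
      \<subseteq> {s. measure lebesgue {y \<in> {0<..<l}. s < g y} \<le> t2}" using t by auto
qed

lemma drearr_mono_fun:
  fixes g :: "real \<Rightarrow> real"
  assumes mono: "\<And>y1 y2. 0 < y1 \<Longrightarrow> y1 \<le> y2 \<Longrightarrow> y2 < l \<Longrightarrow> g y2 \<le> g y1"
    and cont: "continuous_on {0<..<l} g"
    and t: "0 < t" "t < l"
  shows "drearr l g t = g t"
  unfolding drearr_def
proof (rule cInf_eq_minimum)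
  let ?A = "\<lambda>s. {y \<in> {0<..<l}. s < g y}"
  have Asets: "?A s \<in> sets lebesgue" for s
  proof -
    have "open (?A s)"
    proof -
      have "open (g -` {s<..} \<inter> {0<..<l})"
        using continuous_on_open_vimage[OF open_greaterThanLessThan, of 0 l g] cont open_greaterThan by blast
      moreover have "g -` {s<..} \<inter> {0<..<l} = ?A s" by auto
      ultimately show ?thesis by simp
    qed
    then show ?thesis by (simp add: borel_open)
  qed
  have "?A (g t) \<subseteq> {0<..<t}"
  proof
    fix y assume y: "y \<in> ?A (g t)"
    show "y \<in> {0<..<t}"
    proof (rule ccontr)
      assume "y \<notin> {0<..<t}"
      then have "t \<le> y" using y by auto
      then have "g y \<le> g t" using mono[of t y] y t by auto
      then show False using y by simp
    qed
  qed
  then have "measure lebesgue (?A (g t)) \<le> measure lebesgue {0<..<t}"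
    using Asets Ioo_lmeas by (intro measure_mono_fmeasurable) auto
  then show "g t \<in> {s. measure lebesgue (?A s) \<le> t}" using t meas_Ioo[of 0 t] by simp
  fix s assume s: "s \<in> {s. measure lebesgue (?A s) \<le> t}"
  show "g t \<le> s"
  proof (rule ccontr)
    assume "\<not> g t \<le> s"
    then have lt: "s < g t" by simp
    have "continuous (at t within {0<..<l}) g"
      using cont t by (simp add: continuous_on_eq_continuous_within)
    then have "isCont g t"
      using t by (simp add: continuous_within_open[of t "{0<..<l}"])
    then have "\<forall>\<^sub>F y in at t. s < g y"
      using lt by (simp add: isCont_def order_tendstoD(1))
    then obtain e where e: "e > 0" "\<And>y. y \<noteq> t \<Longrightarrow> dist y t < e \<Longrightarrow> s < g y"
      by (auto simp: eventually_at)
    define t' where "t' = min (t + e/2) ((t + l)/2)"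
    have t': "t < t'" "t' < l"
    proof -
      have "t' \<le> (t + l)/2" unfolding t'_def by (rule min.cobounded2)
      moreover have "(t + l)/2 < l" using t by (simp add: field_simps)
      ultimately show "t' < l" by linarith
      show "t < t'" using e t by (simp add: t'_def)
    qed
    have "t' \<le> t + e/2" unfolding t'_def by (rule min.cobounded1)
    then have "dist t' t < e" using t' e by (simp add: dist_real_def)
    then have gt': "s < g t'" using e(2)[of t'] t' by simp
    have "{0<..<t'} \<subseteq> ?A s"
    proof
      fix y assume y: "y \<in> {0<..<t'}"
      then have "g t' \<le> g y" using mono[of y t'] t' by auto
      then show "y \<in> ?A s" using y gt' t' by auto
    qed
    then have "measure lebesgue {0<..<t'} \<le> measure lebesgue (?A s)"
    proof (intro measure_mono_fmeasurable)
      show "?A s \<in> fmeasurable lebesgue"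
        using Asets by (intro bounded_set_imp_lmeasurable) (auto intro: bounded_subset[of "{0<..<l}"])
    qed auto
    then show False using s t' t meas_Ioo[of 0 t'] by simp
  qed
qed

lemma shift_deriv:
  assumes "(f has_derivative f') (at (p + c))"
  shows "((\<lambda>q. f (q + c)) has_derivative f') (at p)"
proof -
  have "((\<lambda>q. q + c) has_derivative (\<lambda>k. k)) (at p)" by (auto intro!: derivative_eq_intros)
  from has_derivative_compose[OF this assms] show ?thesis by simp
qed

lemma mvt_le:
  fixes \<phi> \<phi>' :: "real \<Rightarrow> real"
  assumes "a < b" "continuous_on {a..b} \<phi>"
    "\<And>s. a < s \<Longrightarrow> s < b \<Longrightarrow> (\<phi> has_real_derivative \<phi>' s) (at s)"
    "\<And>s. a < s \<Longrightarrow> s < b \<Longrightarrow> \<phi>' s \<le> c"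
  shows "\<phi> b - \<phi> a \<le> (b - a) * c"
proof -
  obtain L z where z: "a < z" "z < b" "DERIV \<phi> z :> L" "\<phi> b - \<phi> a = (b - a) * L"
    using MVT[OF assms(1,2)] assms(3) real_differentiable_def by metis
  have "L = \<phi>' z" using DERIV_unique[OF z(3) assms(3)[OF z(1,2)]] .
  then have "L \<le> c" using assms(4)[OF z(1,2)] by simp
  then show ?thesis using z(4) assms(1) by (simp add: mult_left_mono)
qed

theorem corollary3p5:
  fixes D :: "'a::euclidean_space set" and \<rho> :: "'a \<Rightarrow> real"
    and l \<alpha> :: real and f v :: "'a \<times> real \<Rightarrow> real"
  assumes dom: "smooth_bounded_domain D \<rho>"
    and l: "l > 0" and alpha: "\<alpha> \<ge> 0"
    and fL2: "set_integrable lebesgue (cyl D l) (\<lambda>p. (f p)\<^sup>2)"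
    and fcont: "continuous_on (closure (cyl D l)) f"
    and fsharpcont: "\<exists>F. continuous_on (closure (cyl D l)) F \<and>
                        (\<forall>p\<in>cyl D l. F p = ysharp l f p)"
    and vsol: "is_solution D \<rho> l \<alpha> (ysharp l f) v"
    and mean0: "\<alpha> = 0 \<Longrightarrow> (LINT p:cyl D l|lebesgue. f p) = 0 \<and> (LINT p:cyl D l|lebesgue. v p) = 0"
    and usol: "\<exists>u. is_solution D \<rho> l \<alpha> f u \<and> (\<alpha> = 0 \<longrightarrow> (LINT p:cyl D l|lebesgue. u p) = 0)"
  shows "\<forall>p\<in>cyl D l. v p = ysharp l v p"
proof -
  obtain G H where C2: "C2_closure_data (cyl D l) v G H"
    and lapv: "\<forall>p\<in>cyl D l. - (\<Sum>i\<in>Basis. H p i \<bullet> i) = ysharp l f p"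
    and tb: "\<forall>x\<in>D. G (x, 0) \<bullet> (0, -1) = 0 \<and> G (x, l) \<bullet> (0, 1) = 0"
    and robv: "\<forall>x\<in>frontier D. \<forall>y\<in>{0..l}. G (x, y) \<bullet> (outer_normal \<rho> x, 0) + \<alpha> * v (x, y) = 0"
    using vsol unfolding is_solution_def by blast
  have dv: "\<forall>p\<in>cyl D l. (v has_derivative (\<lambda>h. G p \<bullet> h)) (at p)"
    and dG: "\<forall>p\<in>cyl D l. \<forall>i\<in>Basis. ((\<lambda>q. G q \<bullet> i) has_derivative (\<lambda>h. H p i \<bullet> h)) (at p)"
    and cv: "continuous_on (closure (cyl D l)) v" and cG: "continuous_on (closure (cyl D l)) G"
    and cH: "\<forall>i\<in>Basis. continuous_on (closure (cyl D l)) (\<lambda>p. H p i)"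
    using C2 unfolding C2_closure_data_def by auto
  have Dbd: "bounded D" using dom unfolding smooth_bounded_domain_def by blast
  have clcyl: "closure (cyl D l) = closure D \<times> {0..l}" using l by (simp add: cyl_def closure_Times)
  have cpt: "compact (closure (cyl D l))" unfolding clcyl
    using Dbd by (intro compact_Times) (auto simp: compact_eq_bounded_closed bounded_closure)
  have cylsub: "cyl D l \<subseteq> closure (cyl D l)" by (rule closure_subset)
  obtain B where B: "\<forall>q\<in>closure (cyl D l). \<bar>f q\<bar> \<le> B"
  proof -
    have "bounded (f ` closure (cyl D l))"
      by (rule compact_imp_bounded[OF compact_continuous_image[OF fcont cpt]])
    then obtain B where "\<forall>z\<in>f ` closure (cyl D l). norm z \<le> B" by (auto simp: bounded_iff)
    then show ?thesis using that by auto
  qed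
  have Fanti: "ysharp l f (x, y') \<le> ysharp l f (x, y)" if "x \<in> D" "0 < y" "y \<le> y'" "y' < l" for x y y'
    unfolding ysharp_def
  proof (simp, rule drearr_antimono)
    show "\<bar>f (x, s)\<bar> \<le> B" if "0 < s" "s < l" for s
    proof -
      have m: "(x, s) \<in> cyl D l" using that \<open>x \<in> D\<close> by (simp add: cyl_def)
      show ?thesis using B cylsub m by blast
    qed
  qed (use that in auto)
  have ucG: "uniformly_continuous_on (closure (cyl D l)) G"
    by (rule compact_uniformly_continuous[OF cG cpt])
  have key: "\<exists>\<delta>>0. \<forall>h. 0 < h \<and> h < \<delta> \<and> h < l \<longrightarrow>
      (\<forall>p\<in>D \<times> {0<..<l-h}. v (p + (0, h)) - v p \<le> h * \<eta>)" if \<eta>: "\<eta> > 0" for \<eta>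
  proof -
    obtain \<delta> where \<delta>: "\<delta> > 0"
      and u\<delta>: "\<And>q q'. q \<in> closure (cyl D l) \<Longrightarrow> q' \<in> closure (cyl D l) \<Longrightarrow> dist q' q < \<delta> \<Longrightarrow> dist (G q') (G q) < \<eta>"
      using ucG \<eta> unfolding uniformly_continuous_on_def by metis
    show ?thesis
    proof (intro exI conjI allI impI)
      show "\<delta> > 0" by fact
      fix h assume h: "0 < h \<and> h < \<delta> \<and> h < l"
      define c where "c = (0::'a, h)"
      define Z where "Z p = v (p + c) - v p" for p
      define G' where "G' p = G (p + c) - G p" for p
      define H' where "H' p i = H (p + c) i - H p i" for p i
      have clU: "closure (D \<times> {0<..<l-h}) = closure D \<times> {0..l-h}" using h by (simp add: closure_Times)
      have im1: "(\<lambda>p. p + c) ` closure (D \<times> {0<..<l-h}) \<subseteq> closure (cyl D l)"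
        unfolding clU clcyl c_def using h by auto
      have im2: "closure (D \<times> {0<..<l-h}) \<subseteq> closure (cyl D l)"
        unfolding clU clcyl using h by auto
      have in1: "p + c \<in> cyl D l" if "p \<in> D \<times> {0<..<l-h}" for p
        using that h by (auto simp: c_def cyl_def)
      have in2: "p \<in> cyl D l" if "p \<in> D \<times> {0<..<l-h}" for p
        using that h by (auto simp: cyl_def)
      have ct: "continuous_on X (\<lambda>p. p + c)" for X :: "('a \<times> real) set" by (intro continuous_intros)
      have "\<forall>p\<in>D \<times> {0<..<l-h}. Z p \<le> h * \<eta>"
      proof (rule max_principle[OF dom _ alpha, where G=G' and H=H'])
        show "0 < l - h" using h by simp
        show "0 \<le> h * \<eta>" using h \<eta> by simp
        show "continuous_on (closure (D \<times> {0<..<l-h})) Z" unfolding Z_def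
          by (intro continuous_on_diff continuous_on_compose2[OF cv ct im1] continuous_on_subset[OF cv im2])
        show "continuous_on (closure (D \<times> {0<..<l-h})) G'" unfolding G'_def
          by (intro continuous_on_diff continuous_on_compose2[OF cG ct im1] continuous_on_subset[OF cG im2])
        show "\<forall>i\<in>Basis. continuous_on (closure (D \<times> {0<..<l-h})) (\<lambda>p. H' p i)"
        proof
          fix i :: "'a \<times> real" assume i: "i \<in> Basis"
          show "continuous_on (closure (D \<times> {0<..<l-h})) (\<lambda>p. H' p i)" unfolding H'_def
            by (intro continuous_on_diff continuous_on_compose2[OF cH[rule_format, OF i] ct im1]
                continuous_on_subset[OF cH[rule_format, OF i] im2])
        qed
        show "\<forall>p\<in>D \<times> {0<..<l-h}. (Z has_derivative (\<lambda>k. G' p \<bullet> k)) (at p)"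
        proof
          fix p assume p: "p \<in> D \<times> {0<..<l-h}"
          have "(Z has_derivative (\<lambda>k. G (p + c) \<bullet> k - G p \<bullet> k)) (at p)" unfolding Z_def
            by (intro has_derivative_diff shift_deriv) (use dv in1[OF p] in2[OF p] in blast)+
          then show "(Z has_derivative (\<lambda>k. G' p \<bullet> k)) (at p)"
            by (simp add: G'_def inner_diff_left)
        qed
        show "\<forall>p\<in>D \<times> {0<..<l-h}. \<forall>i\<in>Basis. ((\<lambda>q. G' q \<bullet> i) has_derivative (\<lambda>k. H' p i \<bullet> k)) (at p)"
        proof (intro ballI)
          fix p i assume p: "p \<in> D \<times> {0<..<l-h}" and i: "i \<in> (Basis :: ('a \<times> real) set)"
          have "((\<lambda>q. G (q + c) \<bullet> i - G q \<bullet> i) has_derivative (\<lambda>k. H (p + c) i \<bullet> k - H p i \<bullet> k)) (at p)"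
            by (intro has_derivative_diff shift_deriv[where f="\<lambda>q. G q \<bullet> i"]) (use dG in1[OF p] in2[OF p] i in blast)+
          then show "((\<lambda>q. G' q \<bullet> i) has_derivative (\<lambda>k. H' p i \<bullet> k)) (at p)"
            by (simp add: G'_def H'_def inner_diff_left)
        qed
        show "\<forall>p\<in>D \<times> {0<..<l-h}. (\<Sum>i\<in>Basis. H' p i \<bullet> i) \<ge> 0"
        proof
          fix p assume p: "p \<in> D \<times> {0<..<l-h}"
          have "(\<Sum>i\<in>Basis. H' p i \<bullet> i) = (\<Sum>i\<in>Basis. H (p + c) i \<bullet> i) - (\<Sum>i\<in>Basis. H p i \<bullet> i)"
            by (simp add: H'_def inner_diff_left sum_subtractf)
          also have "\<dots> = ysharp l f p - ysharp l f (p + c)"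
            using lapv[rule_format, OF in1[OF p]] lapv[rule_format, OF in2[OF p]] by linarith
          also have "\<dots> \<ge> 0"
          proof -
            obtain x y where pxy: "p = (x, y)" by fastforce
            have "ysharp l f (x, y + h) \<le> ysharp l f (x, y)"
              by (rule Fanti) (use p pxy h in auto)
            then show ?thesis by (simp add: pxy c_def)
          qed
          finally show "(\<Sum>i\<in>Basis. H' p i \<bullet> i) \<ge> 0" .
        qed
        show "\<forall>x\<in>frontier D. \<forall>y\<in>{0<..<l-h}. G' (x, y) \<bullet> (outer_normal \<rho> x, 0) + \<alpha> * Z (x, y) = 0"
        proof (intro ballI)
          fix x y assume x: "x \<in> frontier D" and y: "y \<in> {0<..<l-h}"
          have 1: "G (x, y + h) \<bullet> (outer_normal \<rho> x, 0) + \<alpha> * v (x, y + h) = 0"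
          proof -
            have "y + h \<in> {0..l}" using y h by auto
            then show ?thesis using robv x by blast
          qed
          have 2: "G (x, y) \<bullet> (outer_normal \<rho> x, 0) + \<alpha> * v (x, y) = 0"
          proof -
            have "y \<in> {0..l}" using y h by auto
            then show ?thesis using robv x by blast
          qed
          show "G' (x, y) \<bullet> (outer_normal \<rho> x, 0) + \<alpha> * Z (x, y) = 0"
            using 1 2 by (simp add: G'_def Z_def c_def inner_diff_left algebra_simps)
        qed
        show "\<forall>x\<in>D. Z (x, 0) \<le> h * \<eta> \<and> Z (x, l - h) \<le> h * \<eta>"
        proof
          fix x assume x: "x \<in> D"
          have cx: "continuous_on S (\<lambda>s. v (x, s))" if "S \<subseteq> {0..l}" for S
          proof -
            have "(\<lambda>s. (x, s)) ` S \<subseteq> closure (cyl D l)" using that x closure_subset[of D]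
              unfolding clcyl by auto
            then show ?thesis
              by (intro continuous_on_compose2[OF cv]) (auto intro!: continuous_intros)
          qed
          have dx: "((\<lambda>s. v (x, s)) has_real_derivative (G (x, s) \<bullet> (0, 1))) (at s)"
            if "0 < s" "s < l" for s
          proof -
            have "((\<lambda>s. v ((x, 0) + s *\<^sub>R (0, 1))) has_real_derivative (G (x, s) \<bullet> (0, 1))) (at s)"
              using line_deriv[of v "G (x, s)" "(x, 0)" s "(0, 1)"] dv x that by (simp add: cyl_def)
            then show ?thesis by simp
          qed
          have Gnear: "G (x, s) \<bullet> (0, 1) \<le> \<eta>" if "s0 \<in> {0, l}" "G (x, s0) \<bullet> (0, 1) = 0"
            "0 < s" "s < l" "\<bar>s - s0\<bar> < \<delta>" for s s0
          proof -
            have q1: "(x, s) \<in> closure (cyl D l)" and q2: "(x, s0) \<in> closure (cyl D l)"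
              using that x closure_subset[of D] l unfolding clcyl by auto
            have "dist (x, s) (x, s0) < \<delta>" using that by (simp add: dist_Pair_Pair dist_real_def)
            then have "dist (G (x, s)) (G (x, s0)) < \<eta>" using u\<delta>[OF q2 q1] by simp
            moreover have "(G (x, s) - G (x, s0)) \<bullet> (0, 1) \<le> norm (G (x, s) - G (x, s0)) * norm (0::'a, 1::real)"
              by (rule norm_cauchy_schwarz)
            ultimately show ?thesis using that(2)
              by (simp add: inner_diff_left dist_norm norm_Pair)
          qed
          have g0: "G (x, 0) \<bullet> (0, 1) = 0"
          proof -
            have "G (x, 0) \<bullet> (0, -1) = 0" using tb x by blast
            moreover have "(0::'a, -1::real) = - (0, 1)" by simp
            ultimately show ?thesis by (metis inner_minus_right neg_equal_0_iff_equal)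
          qed
          have gl: "G (x, l) \<bullet> (0, 1) = 0" using tb x by blast
          have "v (x, h) - v (x, 0) \<le> (h - 0) * \<eta>"
          proof (rule mvt_le[where \<phi>="\<lambda>s. v (x, s)" and \<phi>'="\<lambda>s. G (x, s) \<bullet> (0, 1)"])
            show "0 < h" using h by simp
            show "continuous_on {0..h} (\<lambda>s. v (x, s))" using h by (intro cx) auto
          qed (use dx h Gnear[OF _ g0] in auto)
          then have b1: "Z (x, 0) \<le> h * \<eta>" by (simp add: Z_def c_def)
          have "v (x, l) - v (x, l - h) \<le> (l - (l - h)) * \<eta>"
          proof (rule mvt_le[where \<phi>="\<lambda>s. v (x, s)" and \<phi>'="\<lambda>s. G (x, s) \<bullet> (0, 1)"])
            show "l - h < l" using h by simp
            show "continuous_on {l-h..l} (\<lambda>s. v (x, s))" using h by (intro cx) auto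
          qed (use dx h Gnear[OF _ gl] in auto)
          then have b2: "Z (x, l - h) \<le> h * \<eta>" by (simp add: Z_def c_def)
          show "Z (x, 0) \<le> h * \<eta> \<and> Z (x, l - h) \<le> h * \<eta>" using b1 b2 by simp
        qed
      qed
      then show "\<forall>p\<in>D \<times> {0<..<l-h}. v (p + (0, h)) - v p \<le> h * \<eta>" by (simp add: Z_def c_def)
    qed
  qed
  have monov: "v (x, y2) \<le> v (x, y1)" if x: "x \<in> D" and y: "0 < y1" "y1 \<le> y2" "y2 < l" for x y1 y2
  proof (rule ccontr)
    assume "\<not> v (x, y2) \<le> v (x, y1)"
    define \<Delta> where "\<Delta> = v (x, y2) - v (x, y1)"
    have \<Delta>: "\<Delta> > 0" using \<open>\<not> v (x, y2) \<le> v (x, y1)\<close> by (simp add: \<Delta>_def)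
    have y12: "y1 < y2" using \<Delta> y by (cases "y1 = y2") (auto simp: \<Delta>_def)
    define \<eta> where "\<eta> = \<Delta> / (2 * (y2 - y1))"
    have \<eta>: "\<eta> > 0" using \<Delta> y12 by (simp add: \<eta>_def)
    obtain \<delta> where \<delta>: "\<delta> > 0" and K: "\<And>h. 0 < h \<Longrightarrow> h < \<delta> \<Longrightarrow> h < l \<Longrightarrow>
        (\<forall>p\<in>D \<times> {0<..<l-h}. v (p + (0, h)) - v p \<le> h * \<eta>)"
      using key[OF \<eta>] by blast
    define N :: nat where "N = nat \<lceil>(y2 - y1) / \<delta>\<rceil> + 1"
    have N0: "N > 0" by (simp add: N_def)
    have "real (nat \<lceil>(y2 - y1) / \<delta>\<rceil>) \<ge> (y2 - y1) / \<delta>" by (rule real_nat_ceiling_ge)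
    then have NN: "real N > (y2 - y1) / \<delta>" by (simp add: N_def)
    define hh where "hh = (y2 - y1) / real N"
    have hh0: "hh > 0" using y12 N0 by (simp add: hh_def)
    have Nhh: "real N * hh = y2 - y1" using N0 by (simp add: hh_def)
    have "y2 - y1 < real N * \<delta>" using NN \<delta> by (simp add: pos_divide_less_eq)
    then have hh\<delta>: "hh < \<delta>" using N0 by (simp add: hh_def pos_divide_less_eq mult.commute)
    have "hh \<le> y2 - y1"
    proof -
      have "1 * hh \<le> real N * hh" using N0 hh0 by (intro mult_right_mono) auto
      then show ?thesis using Nhh by simp
    qed
    then have hhl: "hh < l" using y by linarith
    have ind: "k \<le> N \<Longrightarrow> v (x, y1 + real k * hh) - v (x, y1) \<le> real k * hh * \<eta>" for k
    proof (induction k)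
      case 0 then show ?case by simp
    next
      case (Suc k)
      then have kN: "k < N" by simp
      have "real (Suc k) * hh \<le> real N * hh" using Suc.prems hh0 by (intro mult_right_mono) auto
      then have "y1 + real k * hh + hh \<le> y2" using Nhh by (simp add: algebra_simps)
      moreover have "real k * hh \<ge> 0" using hh0 by simp
      ultimately have a: "0 < y1 + real k * hh" and b: "y1 + real k * hh < l - hh" using y by linarith+
      have p: "(x, y1 + real k * hh) \<in> D \<times> {0<..<l-hh}" using x a b by simp
      have "v ((x, y1 + real k * hh) + (0, hh)) - v (x, y1 + real k * hh) \<le> hh * \<eta>"
        using K[OF hh0 hh\<delta> hhl] p by blast
      moreover have "(x, y1 + real k * hh) + (0, hh) = (x, y1 + real (Suc k) * hh)"
        by (simp add: algebra_simps)
      ultimately show ?case using Suc.IH kN by (simp add: algebra_simps)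
    qed
    have "v (x, y1 + real N * hh) - v (x, y1) \<le> real N * hh * \<eta>" using ind by simp
    then have "\<Delta> \<le> (y2 - y1) * \<eta>" using Nhh by (simp add: \<Delta>_def)
    also have "\<dots> = \<Delta> / 2" using y12 unfolding \<eta>_def by (simp add: field_simps)
    finally show False using \<Delta> by simp
  qed
  show ?thesis
  proof
    fix p assume p: "p \<in> cyl D l"
    obtain x t where pxt: "p = (x, t)" by fastforce
    have x: "x \<in> D" and t: "0 < t" "t < l" using p pxt by (auto simp: cyl_def)
    have "drearr l (\<lambda>y. v (x, y)) t = v (x, t)"
    proof (rule drearr_mono_fun)
      show "continuous_on {0<..<l} (\<lambda>y. v (x, y))"
      proof -
        have "(\<lambda>s. (x, s)) ` {0<..<l} \<subseteq> closure (cyl D l)" using x cylsub by (auto simp: cyl_def)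
        then show ?thesis by (intro continuous_on_compose2[OF cv]) (auto intro!: continuous_intros)
      qed
    qed (use monov x t in auto)
    then show "v p = ysharp l v p" by (simp add: pxt ysharp_def)
  qed
qed

end
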